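(* With the setting in the context, a state $|\Psi\rangle\in\mathcal H$ belongs to the ground state subspace $\mathcal H_0$ if and only if $\Pi_0|\Psi\rangle=|\Psi\rangle$, where $\Pi_0=\mathcal A_0\mathcal B_0$.
   Context: $(C_\bullet,\partial^C_\bullet)$ is a chain complex with each $C_n$ free abelian on a finite set $K_n$, $K_n\ne\emptyset$ for finitely many $n$; $(G_\bullet,\partial^G_\bullet)$ is a chain complex of finite abelian groups. $\mathrm{hom}(C,G)^p=\prod_n\mathrm{Hom}(C_n,G_{n-p})$ with $(\delta^pf)_n=f_{n-1}\partial^C_n-(-1)^p\partial^G_{n-p}f_n$. $\mathrm{hom}(C,G)_p=\mathrm{Hom}(\mathrm{hom}(C,G)^p,U(1))$ (written additively, sum = pointwise product), $\chi_m(f)=m(f)$, $\delta_{p+1}m=m\circ\delta^p$. $\mathcal H=\bigotimes_n\bigotimes_{x\in K_n}\mathbb C[G_n]$ with orthonormal basis $|f\rangle$, $f\in\mathrm{hom}(C,G)^0$ ($|f\rangle=\otimes|f_n(x)\rangle$). $P_t|f\rangle=|f+t\rangle$, $Q_m|f\rangle=\chi_m(f)|f\rangle$; $A_t=P_{\delta^{-1}t}$ for $t\in\mathrm{hom}(C,G)^{-1}$, $B_m=Q_{\delta_1m}$ for $m\in\mathrm{hom}(C,G)_1$. For $s\in\mathrm{hom}(C,G)_{-1}$ and $v\in\mathrm{hom}(C,G)^1$: $\mathcal A_s=\frac1{|\mathrm{hom}(C,G)^{-1}|}\sum_{t\in\mathrm{hom}(C,G)^{-1}}\chi_s(t)A_t$,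 $\mathcal B_v=\frac1{|\mathrm{hom}(C,G)_1|}\sum_{m\in\mathrm{hom}(C,G)_1}\chi_m(v)B_m$; $\mathcal A_0,\mathcal B_0$ are these for $s=0$, $v=0$. Local elements: for $x\in K_n$, $g\in G_{n-p}$, $gx^*\in\mathrm{hom}(C,G)^p$ has $n$-th component sending $x\mapsto g$, other basis elements to $0$, other components $0$; for $r\in\mathrm{Hom}(G_{n-p},U(1))$, $rx_*\in\mathrm{hom}(C,G)_p$, $rx_*(f)=r(f_n(x))$. For $x\in K_n$: $A_x^r=\frac1{|G_{n+1}|}\sum_{h\in G_{n+1}}r(h)A_{hx^*}$ ($r\in\mathrm{Hom}(G_{n+1},U(1))$), $B_x^g=\frac1{|G_{n-1}|}\sum_{r\in\mathrm{Hom}(G_{n-1},U(1))}r(g)B_{rx_*}$ ($g\in G_{n-1}$). Ground state subspace: $\mathcal H_0=\{\Psi: A_x^0\Psi=B_x^0\Psi=\Psi\ \forall n,\forall x\in K_n\}$. *)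

theory Defs
  imports Complex_Main "HOL-Library.Function_Algebras"
begin

definition zmul :: "int \<Rightarrow> 'g::ab_group_add \<Rightarrow> 'g" where
  "zmul k g = (if 0 \<le> k then (((+) g) ^^ nat k) 0 else - ((((+) g) ^^ nat (- k)) 0))"

text \<open>Chain complex C: C n is free abelian on the finite set K n; the boundary is
  given by its integer matrix: dC n x y is the coefficient of y (in K (n-1)) in the
  boundary of x (in K n).\<close>
definition free_chain_complex :: "(int \<Rightarrow> 'k set) \<Rightarrow> (int \<Rightarrow> 'k \<Rightarrow> 'k \<Rightarrow> int) \<Rightarrow> bool" where
  "free_chain_complex K dC \<longleftrightarrow>
     (\<forall>n. finite (K n)) \<and> finite {n. K n \<noteq> {}} \<and>
     (\<forall>n. \<forall>x\<in>K n. \<forall>z\<in>K (n - 2). (\<Sum>y\<in>K (n - 1). dC n x y * dC (n - 1) y z) = 0)"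

definition finite_group_chain_complex :: "(int \<Rightarrow> 'g::ab_group_add set) \<Rightarrow> (int \<Rightarrow> 'g \<Rightarrow> 'g) \<Rightarrow> bool" where
  "finite_group_chain_complex G dG \<longleftrightarrow>
     (\<forall>n. finite (G n) \<and> 0 \<in> G n \<and> (\<forall>a\<in>G n. \<forall>b\<in>G n. a + b \<in> G n) \<and> (\<forall>a\<in>G n. - a \<in> G n)) \<and>
     (\<forall>n. \<forall>a\<in>G n. dG n a \<in> G (n - 1)) \<and>
     (\<forall>n. \<forall>a\<in>G n. \<forall>b\<in>G n. dG n (a + b) = dG n a + dG n b) \<and>
     (\<forall>n. \<forall>a\<in>G n. dG (n - 1) (dG n a) = 0)"

text \<open>hom(C,G)^p = prod_n Hom(C_n, G_{n-p}); a homomorphism on the free group C_n is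
  identified with its values on the basis K n (extended by 0 off K n).\<close>
definition cochains :: "(int \<Rightarrow> 'k set) \<Rightarrow> (int \<Rightarrow> 'g::ab_group_add set) \<Rightarrow> int \<Rightarrow> (int \<Rightarrow> 'k \<Rightarrow> 'g) set" where
  "cochains K G p = {f. (\<forall>n. \<forall>x\<in>K n. f n x \<in> G (n - p)) \<and> (\<forall>n x. x \<notin> K n \<longrightarrow> f n x = 0)}"

text \<open>(delta^p f)_n = f_{n-1} \<circ> dC_n - (-1)^p dG_{n-p} \<circ> f_n.\<close>
definition coboundary :: "(int \<Rightarrow> 'k set) \<Rightarrow> (int \<Rightarrow> 'k \<Rightarrow> 'k \<Rightarrow> int) \<Rightarrow> (int \<Rightarrow> 'g::ab_group_add \<Rightarrow> 'g)
    \<Rightarrow> int \<Rightarrow> (int \<Rightarrow> 'k \<Rightarrow> 'g) \<Rightarrow> (int \<Rightarrow> 'k \<Rightarrow> 'g)" where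
  "coboundary K dC dG p f = (\<lambda>n x. if x \<in> K n then
      (\<Sum>y\<in>K (n - 1). zmul (dC n x y) (f (n - 1) y))
        - (if even p then dG (n - p) (f n x) else - dG (n - p) (f n x))
     else 0)"

text \<open>U(1)-valued characters of a subgroup A (as unit complex numbers, multiplication
  being the group law), extended by 0 outside A.\<close>
definition characters :: "'a::plus set \<Rightarrow> ('a \<Rightarrow> complex) set" where
  "characters A = {m. (\<forall>a\<in>A. \<forall>b\<in>A. m (a + b) = m a * m b) \<and> (\<forall>a\<in>A. cmod (m a) = 1)
                      \<and> (\<forall>a. a \<notin> A \<longrightarrow> m a = 0)}"

definition chains_dual :: "(int \<Rightarrow> 'k set) \<Rightarrow> (int \<Rightarrow> 'g::ab_group_add set) \<Rightarrow> int \<Rightarrow> ((int \<Rightarrow> 'k \<Rightarrow> 'g) \<Rightarrow> complex) set" where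
  "chains_dual K G p = characters (cochains K G p)"

text \<open>delta_{p+1} m = m \<circ> delta^p (as an element of hom(C,G)_p).\<close>
definition dual_boundary where
  "dual_boundary K dC G dG p m = (\<lambda>f. if f \<in> cochains K G p then m (coboundary K dC dG p f) else 0)"

text \<open>The Hilbert space: complex amplitudes on the basis |f>, f \<in> hom(C,G)^0.\<close>
definition hilb :: "(int \<Rightarrow> 'k set) \<Rightarrow> (int \<Rightarrow> 'g::ab_group_add set) \<Rightarrow> ((int \<Rightarrow> 'k \<Rightarrow> 'g) \<Rightarrow> complex) set" where
  "hilb K G = {\<Psi>. \<forall>f. f \<notin> cochains K G 0 \<longrightarrow> \<Psi> f = 0}"

text \<open>P_t |f> = |f + t>, Q_m |f> = chi_m(f) |f>.\<close>
definition Pop :: "(int \<Rightarrow> 'k \<Rightarrow> 'g::ab_group_add) \<Rightarrow> ((int \<Rightarrow> 'k \<Rightarrow> 'g) \<Rightarrow> complex) \<Rightarrow> ((int \<Rightarrow> 'k \<Rightarrow> 'g) \<Rightarrow> complex)" where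
  "Pop t \<Psi> = (\<lambda>h. \<Psi> (h - t))"

definition Qop :: "((int \<Rightarrow> 'k \<Rightarrow> 'g) \<Rightarrow> complex) \<Rightarrow> ((int \<Rightarrow> 'k \<Rightarrow> 'g) \<Rightarrow> complex) \<Rightarrow> ((int \<Rightarrow> 'k \<Rightarrow> 'g) \<Rightarrow> complex)" where
  "Qop m \<Psi> = (\<lambda>f. m f * \<Psi> f)"

definition Aop where "Aop K dC dG t = Pop (coboundary K dC dG (-1) t)"
definition Bop where "Bop K dC G dG m = Qop (dual_boundary K dC G dG 0 m)"

text \<open>The projectors \<A>_0 and \<B>_0 (s = 0, v = 0, so the characters are 1).\<close>
definition calA0 where
  "calA0 K dC G dG \<Psi> = (\<lambda>h. (\<Sum>t\<in>cochains K G (-1). Aop K dC dG t \<Psi> h) / of_nat (card (cochains K G (-1))))"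

definition calB0 where
  "calB0 K dC G dG \<Psi> = (\<lambda>h. (\<Sum>m\<in>chains_dual K G 1. Bop K dC G dG m \<Psi> h) / of_nat (card (chains_dual K G 1)))"

definition Pi0 where "Pi0 K dC G dG \<Psi> = calA0 K dC G dG (calB0 K dC G dG \<Psi>)"

definition local_cochain :: "int \<Rightarrow> 'k \<Rightarrow> 'g::zero \<Rightarrow> (int \<Rightarrow> 'k \<Rightarrow> 'g)" where
  "local_cochain n x g = (\<lambda>m y. if m = n \<and> y = x then g else 0)"

definition local_chain where
  "local_chain K G p n x r = (\<lambda>f. if f \<in> cochains K G p then r (f n x) else 0)"

definition Ax0 where
  "Ax0 K dC G dG n x \<Psi> = (\<lambda>h. (\<Sum>g\<in>G (n + 1). Aop K dC dG (local_cochain n x g) \<Psi> h) / of_nat (card (G (n + 1))))"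

definition Bx0 where
  "Bx0 K dC G dG n x \<Psi> = (\<lambda>h. (\<Sum>r\<in>characters (G (n - 1)). Bop K dC G dG (local_chain K G 1 n x r) \<Psi> h)
                              / of_nat (card (G (n - 1))))"

definition ground_space where
  "ground_space K dC G dG = {\<Psi> \<in> hilb K G. \<forall>n. \<forall>x\<in>K n. Ax0 K dC G dG n x \<Psi> = \<Psi> \<and> Bx0 K dC G dG n x \<Psi> = \<Psi>}"

end

theory Submission
  imports Defs
begin



lemma zmul_0[simp]: "zmul 0 g = 0" by (simp add: zmul_def)

lemma zmul_succ: "zmul (k+1) g = zmul k g + (g::'g::ab_group_add)"
proof (cases "k \<ge> 0")
  case True
  then have "nat (k+1) = Suc (nat k)" by simp
  then show ?thesis using True by (simp add: zmul_def add.commute)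
next
  case False
  show ?thesis
  proof (cases "k = -1")
    case True then show ?thesis by (simp add: zmul_def)
  next
    case F2: False
    then have "nat (-k) = Suc (nat (-(k+1)))" using False by simp
    then show ?thesis using False F2 by (simp add: zmul_def algebra_simps)
  qed
qed

lemma zmul_pred: "zmul (k - 1) g = zmul k g - (g::'g::ab_group_add)"
  using zmul_succ[of "k-1" g] by (simp add: algebra_simps)

lemma zmul_add_left: "zmul (a + b) g = zmul a g + zmul b (g::'g::ab_group_add)"
proof (induction b rule: int_induct[where k=0])
  case base then show ?case by simp
next
  case (step1 i)
  have "zmul (a + (i+1)) g = zmul ((a+i)+1) g" by (simp add: add.assoc)
  also have "\<dots> = zmul (a+i) g + g" by (rule zmul_succ)
  finally show ?case using step1 zmul_succ[of i g] by (simp add: add.assoc)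
next
  case (step2 i)
  have "zmul (a + (i-1)) g = zmul ((a+i)-1) g" by (simp add: algebra_simps)
  also have "\<dots> = zmul (a+i) g - g" by (rule zmul_pred)
  finally have "zmul (a + (i-1)) g = zmul a g + zmul i g - g" using step2 by simp
  then show ?case using zmul_pred[of i g] by (metis add_diff_eq)
qed

lemma zmul_add_right: "zmul k (g + h) = zmul k g + zmul k (h::'g::ab_group_add)"
proof (induction k rule: int_induct[where k=0])
  case base then show ?case by simp
next
  case (step1 i) then show ?case unfolding zmul_succ by (simp add: algebra_simps)
next
  case (step2 i) then show ?case unfolding zmul_pred by (simp add: algebra_simps)
qed

lemma zmul_1[simp]: "zmul 1 g = (g::'g::ab_group_add)" using zmul_succ[of 0 g] by simp

lemma zmul_zero_right[simp]: "zmul k (0::'g::ab_group_add) = 0"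
  using zmul_add_right[of k 0 0] by simp

lemma zmul_mult: "zmul (a * b) g = zmul a (zmul b (g::'g::ab_group_add))"
proof (induction a rule: int_induct[where k=0])
  case base then show ?case by simp
next
  case (step1 i)
  have "zmul ((i+1)*b) g = zmul (i*b + b) g" by (simp add: algebra_simps)
  also have "\<dots> = zmul (i*b) g + zmul b g" by (rule zmul_add_left)
  finally show ?case using step1 unfolding zmul_succ by simp
next
  case (step2 i)
  have "zmul ((i-1)*b) g + zmul b g = zmul ((i-1)*b + b) g" by (simp add: zmul_add_left)
  also have "\<dots> = zmul (i*b) g" by (simp add: algebra_simps)
  finally show ?case using step2 unfolding zmul_pred by (simp add: algebra_simps)
qed

lemma zmul_sum_right: "zmul k (\<Sum>i\<in>S. f i) = (\<Sum>i\<in>S. zmul k (f i :: 'g::ab_group_add))"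
  by (induction S rule: infinite_finite_induct) (auto simp: zmul_add_right)

lemma zmul_sum_left: "zmul (\<Sum>i\<in>S. f i) g = (\<Sum>i\<in>S. zmul (f i) (g :: 'g::ab_group_add))"
  by (induction S rule: infinite_finite_induct) (auto simp: zmul_add_left)

lemma zmul_neg_left: "zmul (-a) g = - zmul a (g::'g::ab_group_add)"
  using zmul_add_left[of a "-a" g] by (simp add: eq_neg_iff_add_eq_0 add.commute)

lemma sum_fun_apply: "(\<Sum>i\<in>S. f i) x = (\<Sum>i\<in>S. f i x)"
  by (induction S rule: infinite_finite_induct) auto

definition subgrp :: "'g::ab_group_add set \<Rightarrow> bool" where
  "subgrp A \<longleftrightarrow> 0 \<in> A \<and> (\<forall>a\<in>A. \<forall>b\<in>A. a + b \<in> A) \<and> (\<forall>a\<in>A. - a \<in> A)"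

lemma subgrp_0: "subgrp A \<Longrightarrow> 0 \<in> A" by (simp add: subgrp_def)
lemma subgrp_add: "subgrp A \<Longrightarrow> a \<in> A \<Longrightarrow> b \<in> A \<Longrightarrow> a + b \<in> A" by (simp add: subgrp_def)
lemma subgrp_neg: "subgrp A \<Longrightarrow> a \<in> A \<Longrightarrow> - a \<in> A" by (simp add: subgrp_def)
lemma subgrp_diff: "subgrp A \<Longrightarrow> a \<in> A \<Longrightarrow> b \<in> A \<Longrightarrow> a - b \<in> A"
  using subgrp_add[of A a "-b"] subgrp_neg[of A b] by simp
lemma subgrp_sum: "subgrp A \<Longrightarrow> (\<And>i. i \<in> S \<Longrightarrow> f i \<in> A) \<Longrightarrow> (\<Sum>i\<in>S. f i) \<in> A"
  by (induction S rule: infinite_finite_induct) (auto simp: subgrp_0 subgrp_add)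
lemma subgrp_zmul: "subgrp A \<Longrightarrow> a \<in> A \<Longrightarrow> zmul k a \<in> A"
proof (induction k rule: int_induct[where k=0])
  case base then show ?case by (simp add: subgrp_0)
next
  case (step1 i) then show ?case by (simp add: zmul_succ subgrp_add)
next
  case (step2 i) then show ?case by (simp add: zmul_pred subgrp_diff)
qed

lemma hom_0: assumes "subgrp A" "\<And>a b. a \<in> A \<Longrightarrow> b \<in> A \<Longrightarrow> \<phi> (a + b) = \<phi> a + (\<phi> b :: 'h::ab_group_add)"
  shows "\<phi> 0 = 0"
  using assms(2)[of 0 0] subgrp_0[OF assms(1)] by simp

lemma hom_neg: assumes "subgrp A" "\<And>a b. a \<in> A \<Longrightarrow> b \<in> A \<Longrightarrow> \<phi> (a + b) = \<phi> a + (\<phi> b :: 'h::ab_group_add)"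
  and "a \<in> A" shows "\<phi> (- a) = - \<phi> a"
proof -
  have "\<phi> a + \<phi> (- a) = 0" using assms(2)[of a "-a"] hom_0[OF assms(1,2)] subgrp_neg[OF assms(1,3)] assms(3) by simp
  then show ?thesis by (simp add: eq_neg_iff_add_eq_0 add.commute)
qed

lemma hom_zmul: assumes "subgrp A" "\<And>a b. a \<in> A \<Longrightarrow> b \<in> A \<Longrightarrow> \<phi> (a + b) = \<phi> a + (\<phi> b :: 'h::ab_group_add)"
  and "a \<in> A" shows "\<phi> (zmul k a) = zmul k (\<phi> a)"
proof (induction k rule: int_induct[where k=0])
  case base then show ?case using hom_0[OF assms(1,2)] by simp
next
  case (step1 i) then show ?case using assms subgrp_zmul[OF assms(1,3)] by (simp add: zmul_succ)
next
  case (step2 i)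
  have "\<phi> (zmul i a) = \<phi> (zmul (i - 1) a + a)" by (simp add: zmul_pred)
  also have "\<dots> = \<phi> (zmul (i - 1) a) + \<phi> a" using assms subgrp_zmul[OF assms(1,3)] by simp
  finally show ?case using step2 by (simp add: zmul_pred algebra_simps)
qed

lemma hom_sum: assumes "subgrp A" "\<And>a b. a \<in> A \<Longrightarrow> b \<in> A \<Longrightarrow> \<phi> (a + b) = \<phi> a + (\<phi> b :: 'h::ab_group_add)"
  and "\<And>i. i \<in> S \<Longrightarrow> f i \<in> A" shows "\<phi> (\<Sum>i\<in>S. f i) = (\<Sum>i\<in>S. \<phi> (f i))"
  using assms(3)
proof (induction S rule: infinite_finite_induct)
  case (infinite A) then show ?case using hom_0[OF assms(1,2)] by simp
next
  case empty then show ?case using hom_0[OF assms(1,2)] by simp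
next
  case (insert x F) then show ?case using assms(2) subgrp_sum[OF assms(1), of F f] by simp
qed




lemma exists_period:
  assumes "finite A" "subgrp A" "a \<in> A"
  shows "\<exists>k::nat. 0 < k \<and> zmul (int k) a = 0"
proof -
  let ?f = "\<lambda>j::nat. zmul (int j) a"
  have "?f ` UNIV \<subseteq> A" using subgrp_zmul[OF assms(2,3)] by auto
  then have "finite (?f ` UNIV)" using assms(1) finite_subset by blast
  then have "\<not> inj ?f" using finite_imageD infinite_UNIV_nat by blast
  then obtain i j where ij: "i \<noteq> j" "?f i = ?f j" unfolding inj_def by blast
  have key: "zmul (int j - int i) a = 0" if "?f i = ?f j" for i j
  proof -
    have "zmul (int j) a = zmul (int j - int i) a + zmul (int i) a"
      using zmul_add_left[of "int j - int i" "int i" a] by simp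
    then show ?thesis using that by simp
  qed
  show ?thesis
  proof (cases "i < j")
    case True
    then show ?thesis using key[OF ij(2)] by (intro exI[of _ "j - i"]) (simp add: of_nat_diff)
  next
    case False
    then show ?thesis using key[of j i] ij by (intro exI[of _ "i - j"]) (simp add: of_nat_diff)
  qed
qed

lemma least_period:
  assumes "finite A" "subgrp A" "subgrp H" "g \<in> A"
  shows "\<exists>k::nat. 0 < k \<and> zmul (int k) g \<in> H \<and> (\<forall>r. 0 < r \<and> r < k \<longrightarrow> zmul (int r) g \<notin> H)"
proof -
  let ?P = "\<lambda>k::nat. 0 < k \<and> zmul (int k) g \<in> H"
  obtain k0 where "0 < k0" "zmul (int k0) g = 0" using exists_period[OF assms(1,2,4)] by blast
  then have "?P k0" using subgrp_0[OF assms(3)] by simp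
  then have "?P (LEAST k. ?P k)" by (rule LeastI)
  moreover have "\<forall>r. 0 < r \<and> r < (LEAST k. ?P k) \<longrightarrow> zmul (int r) g \<notin> H"
    using not_less_Least by blast
  ultimately show ?thesis by blast
qed

lemma char_mult: "m \<in> characters A \<Longrightarrow> a \<in> A \<Longrightarrow> b \<in> A \<Longrightarrow> m (a + b) = m a * m b"
  by (simp add: characters_def)
lemma char_norm: "m \<in> characters A \<Longrightarrow> a \<in> A \<Longrightarrow> cmod (m a) = 1"
  by (simp add: characters_def)
lemma char_out: "m \<in> characters A \<Longrightarrow> a \<notin> A \<Longrightarrow> m a = 0"
  by (simp add: characters_def)
lemma char_nz: "m \<in> characters A \<Longrightarrow> a \<in> A \<Longrightarrow> m a \<noteq> 0"
  using char_norm by fastforce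

lemma char_0: assumes "subgrp A" "m \<in> characters A" shows "m 0 = 1"
proof -
  have "m 0 = m 0 * m 0" using char_mult[OF assms(2), of 0 0] subgrp_0[OF assms(1)] by simp
  moreover have "m 0 \<noteq> 0" using char_nz[OF assms(2) subgrp_0[OF assms(1)]] .
  ultimately show ?thesis by simp
qed

lemma char_zmul: assumes "subgrp A" "m \<in> characters A" "a \<in> A"
  shows "m (zmul k a) = (m a) powi k"
proof (induction k rule: int_induct[where k=0])
  case base then show ?case using char_0[OF assms(1,2)] by simp
next
  case (step1 i)
  have "m (zmul (i+1) a) = m (zmul i a) * m a"
    unfolding zmul_succ using char_mult[OF assms(2) subgrp_zmul[OF assms(1,3)] assms(3)] by simp
  then show ?case using step1 power_int_add[of "m a" i 1] char_nz[OF assms(2,3)] by simp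
next
  case (step2 i)
  have "m (zmul i a) = m (zmul (i - 1) a) * m a"
    using char_mult[OF assms(2) subgrp_zmul[OF assms(1,3)] assms(3), of "i - 1"]
    by (simp add: zmul_pred)
  moreover have "(m a) powi i = (m a) powi (i - 1) * m a"
    using power_int_add[of "m a" "i - 1" 1] char_nz[OF assms(2,3)] by simp
  ultimately show ?case using step2 char_nz[OF assms(2,3)] by simp
qed

definition triv :: "'g set \<Rightarrow> 'g \<Rightarrow> complex" where
  "triv A = (\<lambda>x. if x \<in> A then 1 else 0)"

lemma triv_char: "subgrp A \<Longrightarrow> triv A \<in> characters A"
  by (auto simp: characters_def triv_def subgrp_add)

lemma finite_chars: fixes A :: "'g::ab_group_add set" assumes "finite A" "subgrp A" shows "finite (characters A)"
proof -
  define per where "per a = (SOME k::nat. 0 < k \<and> zmul (int k) a = 0)" for a :: 'g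
  have per: "0 < per a \<and> zmul (int (per a)) a = 0" if "a \<in> A" for a
    unfolding per_def using someI_ex[OF exists_period[OF assms that]] .
  define R where "R = (\<Union>a\<in>A. {z::complex. z ^ per a = 1})"
  have "finite R" unfolding R_def using assms(1) per by (auto intro!: finite_roots_unity simp: Suc_le_eq)
  have "characters A \<subseteq> {f. \<forall>x. (x \<in> A \<longrightarrow> f x \<in> R) \<and> (x \<notin> A \<longrightarrow> f x = 0)}"
  proof (safe)
    fix m x assume m: "m \<in> characters A" and x: "x \<in> A"
    have "m x ^ per x = m (zmul (int (per x)) x)" using char_zmul[OF assms(2) m x] by simp
    also have "\<dots> = 1" using per[OF x] char_0[OF assms(2) m] by simp
    finally show "m x \<in> R" unfolding R_def using x by blast
  next
    fix m x assume "m \<in> characters A" "x \<notin> A" then show "m x = 0" by (rule char_out)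
  qed
  then show ?thesis using finite_set_of_finite_funs[OF assms(1) \<open>finite R\<close>] finite_subset by blast
qed

lemma cis_root: assumes "cmod c = 1" "0 < k"
  shows "cis (Arg c / real k) ^ k = c"
proof -
  have "cis (Arg c / real k) ^ k = cis (Arg c)" using assms(2) by (simp add: DeMoivre)
  also have "\<dots> = sgn c" using assms(1) by (intro cis_Arg) auto
  also have "\<dots> = c" using assms(1) by (simp add: sgn_eq)
  finally show ?thesis .
qed




definition spanH :: "'g::ab_group_add set \<Rightarrow> 'g \<Rightarrow> 'g set" where
  "spanH H g = {h + zmul j g | h j. h \<in> H}"

lemma spanH_subgrp: assumes "subgrp H" shows "subgrp (spanH H g)"
  unfolding subgrp_def spanH_def
proof (intro conjI ballI)
  show "0 \<in> {h + zmul j g |h j. h \<in> H}" using subgrp_0[OF assms] by (intro CollectI exI[of _ 0]) auto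
next
  fix a b assume "a \<in> {h + zmul j g |h j. h \<in> H}" "b \<in> {h + zmul j g |h j. h \<in> H}"
  then obtain h1 j1 h2 j2 where "a = h1 + zmul j1 g" "b = h2 + zmul j2 g" "h1 \<in> H" "h2 \<in> H" by blast
  then show "a + b \<in> {h + zmul j g |h j. h \<in> H}"
    by (intro CollectI exI[of _ "h1 + h2"] exI[of _ "j1 + j2"])
       (auto simp: zmul_add_left subgrp_add[OF assms] algebra_simps)
next
  fix a assume "a \<in> {h + zmul j g |h j. h \<in> H}"
  then obtain h1 j1 where "a = h1 + zmul j1 g" "h1 \<in> H" by blast
  then show "- a \<in> {h + zmul j g |h j. h \<in> H}"
    by (intro CollectI exI[of _ "- h1"] exI[of _ "- j1"])
       (auto simp: zmul_neg_left subgrp_neg[OF assms])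
qed

lemma spanH_sub: assumes "subgrp A" "H \<subseteq> A" "g \<in> A" shows "spanH H g \<subseteq> A"
  unfolding spanH_def using assms subgrp_add[OF assms(1)] subgrp_zmul[OF assms(1)] by blast

lemma spanH_H: "h \<in> H \<Longrightarrow> h \<in> spanH H g"
  unfolding spanH_def by (intro CollectI exI[of _ h] exI[of _ 0]) simp

lemma spanH_g: "subgrp H \<Longrightarrow> g \<in> spanH H g"
  unfolding spanH_def using subgrp_0 by (intro CollectI exI[of _ 0] exI[of _ 1]) auto

lemma char_ext_step:
  assumes H: "subgrp H" and chi: "\<chi> \<in> characters H"
    and w: "cmod w = 1" and k: "0 < k" "zmul (int k) g \<in> H"
    and kmin: "\<forall>r. 0 < r \<and> r < k \<longrightarrow> zmul (int r) g \<notin> H"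
    and wk: "w ^ k = \<chi> (zmul (int k) g)"
  shows "\<exists>\<psi> \<in> characters (spanH H g). (\<forall>h\<in>H. \<psi> h = \<chi> h) \<and> \<psi> g = w"
proof -
  have wnz: "w \<noteq> 0" using w by auto
  have wd: "\<chi> h * w powi j = \<chi> h' * w powi j'"
    if hh: "h \<in> H" "h' \<in> H" and eq: "h + zmul j g = h' + zmul j' g" for h h' j j'
  proof -
    define d where "d = j - j'"
    have "zmul j g = zmul d g + zmul j' g" unfolding d_def using zmul_add_left[of "j - j'" j' g] by simp
    then have zd: "zmul d g = h' - h" using eq by (simp add: algebra_simps)
    define q where "q = d div int k"
    define r where "r = d mod int k"
    have dqr: "d = q * int k + r" unfolding q_def r_def by simp
    have r0: "0 \<le> r" "r < int k" unfolding r_def using k by auto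
    have "zmul d g = zmul q (zmul (int k) g) + zmul r g"
      unfolding dqr zmul_add_left zmul_mult ..
    then have "zmul r g = (h' - h) - zmul q (zmul (int k) g)" using zd by (simp add: algebra_simps)
    then have "zmul r g \<in> H" using subgrp_diff[OF H subgrp_diff[OF H hh(2,1)] subgrp_zmul[OF H k(2)]] by simp
    have "r = 0"
    proof (rule ccontr)
      assume "r \<noteq> 0"
      then have "0 < nat r" "nat r < k" using r0 by auto
      then have "zmul (int (nat r)) g \<notin> H" using kmin by blast
      then show False using \<open>zmul r g \<in> H\<close> r0 by simp
    qed
    then have dq: "d = int k * q" using dqr by simp
    have h': "h' = h + zmul q (zmul (int k) g)"
      using zd dq zmul_mult[of q "int k" g] by (simp add: algebra_simps)
    have "\<chi> h' = \<chi> h * (\<chi> (zmul (int k) g)) powi q"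
      unfolding h' using char_mult[OF chi hh(1) subgrp_zmul[OF H k(2)]] char_zmul[OF H chi k(2)] by simp
    also have "\<dots> = \<chi> h * w powi (int k * q)"
      unfolding wk[symmetric] by (simp add: power_int_mult)
    finally have 1: "\<chi> h' = \<chi> h * w powi (int k * q)" .
    have "w powi j = w powi (j' + int k * q)" using dq unfolding d_def by (simp add: algebra_simps)
    also have "\<dots> = w powi j' * w powi (int k * q)" using power_int_add wnz by blast
    finally show ?thesis using 1 by (simp add: algebra_simps)
  qed
  let ?S = "spanH H g"
  define rep where "rep x = (SOME p. fst p \<in> H \<and> x = fst p + zmul (snd p) g)" for x
  define \<psi> where "\<psi> x = (if x \<in> ?S then \<chi> (fst (rep x)) * w powi (snd (rep x)) else 0)" for x
  have val: "\<psi> (h + zmul j g) = \<chi> h * w powi j" if "h \<in> H" for h j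
  proof -
    have mem: "h + zmul j g \<in> ?S" unfolding spanH_def using that by blast
    have "\<exists>p. fst p \<in> H \<and> h + zmul j g = fst p + zmul (snd p) g" using that by (intro exI[of _ "(h,j)"]) simp
    then have "fst (rep (h + zmul j g)) \<in> H \<and> h + zmul j g = fst (rep (h + zmul j g)) + zmul (snd (rep (h + zmul j g))) g"
      unfolding rep_def by (rule someI_ex)
    then show ?thesis unfolding \<psi>_def using mem wd[OF that] by metis
  qed
  have "\<psi> \<in> characters ?S"
    unfolding characters_def
  proof (intro CollectI conjI ballI allI impI)
    fix a b assume "a \<in> ?S" "b \<in> ?S"
    then obtain h1 j1 h2 j2 where ab: "a = h1 + zmul j1 g" "b = h2 + zmul j2 g" "h1 \<in> H" "h2 \<in> H"
      unfolding spanH_def by blast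
    have "a + b = (h1 + h2) + zmul (j1 + j2) g" unfolding ab zmul_add_left by (simp add: algebra_simps)
    then have "\<psi> (a + b) = \<chi> (h1 + h2) * w powi (j1 + j2)" using val subgrp_add[OF H ab(3,4)] by simp
    also have "\<dots> = (\<chi> h1 * w powi j1) * (\<chi> h2 * w powi j2)"
      using char_mult[OF chi ab(3,4)] power_int_add[of w j1 j2] wnz by simp
    finally show "\<psi> (a + b) = \<psi> a * \<psi> b" using val ab by simp
  next
    fix a assume "a \<in> ?S"
    then obtain h1 j1 where ab: "a = h1 + zmul j1 g" "h1 \<in> H" unfolding spanH_def by blast
    show "cmod (\<psi> a) = 1" using val[OF ab(2)] char_norm[OF chi ab(2)] w unfolding ab
      by (simp add: norm_mult norm_power_int)
  next
    fix a assume "a \<notin> ?S" then show "\<psi> a = 0" unfolding \<psi>_def by simp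
  qed
  moreover have "\<forall>h\<in>H. \<psi> h = \<chi> h" using val[of _ 0] by simp
  moreover have "\<psi> g = w" using val[OF subgrp_0[OF H], of 1] char_0[OF H chi] by simp
  ultimately show ?thesis by blast
qed




lemma char_extend:
  assumes "finite A" "subgrp A" "subgrp H" "H \<subseteq> A" "\<chi> \<in> characters H"
  shows "\<exists>\<psi> \<in> characters A. \<forall>h\<in>H. \<psi> h = \<chi> h"
  using assms(3-5)
proof (induction "card (A - H)" arbitrary: H \<chi> rule: less_induct)
  case less
  show ?case
  proof (cases "H = A")
    case True then show ?thesis using less.prems by blast
  next
    case False
    then obtain g where g: "g \<in> A" "g \<notin> H" using less.prems(2) by blast
    obtain k where k: "0 < k" "zmul (int k) g \<in> H" "\<forall>r. 0 < r \<and> r < k \<longrightarrow> zmul (int r) g \<notin> H"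
      using least_period[OF assms(1,2) less.prems(1) g(1)] by blast
    define c where "c = \<chi> (zmul (int k) g)"
    have c: "cmod c = 1" unfolding c_def using char_norm[OF less.prems(3) k(2)] .
    define w where "w = cis (Arg c / real k)"
    have "w ^ k = c" unfolding w_def using cis_root[OF c k(1)] .
    then have "\<exists>\<psi>\<in>characters (spanH H g). (\<forall>h\<in>H. \<psi> h = \<chi> h) \<and> \<psi> g = w"
      by (intro char_ext_step[OF less.prems(1,3) _ k(1,2,3)]) (simp_all add: w_def c_def)
    then obtain \<psi>' where psi': "\<psi>' \<in> characters (spanH H g)" "\<forall>h\<in>H. \<psi>' h = \<chi> h" by blast
    have sub: "spanH H g \<subseteq> A" using spanH_sub[OF assms(2) less.prems(2) g(1)] .
    have "A - spanH H g \<subset> A - H" using g spanH_g[OF less.prems(1)] spanH_H[of _ H g] by blast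
    then have "card (A - spanH H g) < card (A - H)" using assms(1) by (meson finite_Diff psubset_card_mono)
    then obtain \<psi> where "\<psi> \<in> characters A" "\<forall>h\<in>spanH H g. \<psi> h = \<psi>' h"
      using less.hyps[OF _ spanH_subgrp[OF less.prems(1)] sub psi'(1)] by blast
    then show ?thesis using psi'(2) spanH_H[of _ H g] by metis
  qed
qed

lemma char_separate:
  assumes "finite A" "subgrp A" "a \<in> A" "a \<noteq> 0"
  shows "\<exists>\<chi> \<in> characters A. \<chi> a \<noteq> 1"
proof -
  have H0: "subgrp {0::'a}" by (simp add: subgrp_def)
  define \<chi>0 where "\<chi>0 = triv {0::'a}"
  have chi0: "\<chi>0 \<in> characters {0}" unfolding \<chi>0_def using triv_char[OF H0] .
  obtain k where k: "0 < k" "zmul (int k) a \<in> {0}" "\<forall>r. 0 < r \<and> r < k \<longrightarrow> zmul (int r) a \<notin> {0}"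
    using least_period[OF assms(1,2) H0 assms(3)] by blast
  have "k \<noteq> 1" using k(2) assms(4) by auto
  then have k2: "1 < k" using k(1) by simp
  define f where "f j = cis (2 * pi * real j / real k)" for j :: nat
  have "inj_on f {..<k}" using bij_betw_roots_unity[OF k(1)] unfolding bij_betw_def f_def by blast
  moreover have "(1::nat) \<in> {..<k}" "(0::nat) \<in> {..<k}" using k2 by auto
  ultimately have "f 1 \<noteq> f 0" unfolding inj_on_def by (metis zero_neq_one)
  then have w1: "f 1 \<noteq> 1" unfolding f_def by simp
  have wk: "f 1 ^ k = 1" unfolding f_def using k(1) by (simp add: DeMoivre)
  have "f 1 ^ k = \<chi>0 (zmul (int k) a)" using wk k(2) unfolding \<chi>0_def triv_def by simp
  then have "\<exists>\<psi>\<in>characters (spanH {0} a). (\<forall>h\<in>{0}. \<psi> h = \<chi>0 h) \<and> \<psi> a = f 1"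
    by (intro char_ext_step[OF H0 chi0 _ k(1,2,3)]) (simp_all add: f_def)
  then obtain \<psi>' where psi': "\<psi>' \<in> characters (spanH {0} a)" "\<psi>' a = f 1" by blast
  obtain \<psi> where "\<psi> \<in> characters A" "\<forall>h\<in>spanH {0} a. \<psi> h = \<psi>' h"
    using char_extend[OF assms(1,2) spanH_subgrp[OF H0] spanH_sub[OF assms(2) _ assms(3)] psi'(1)]
      subgrp_0[OF assms(2)] by blast
  then show ?thesis using psi' w1 spanH_g[OF H0, of a] by metis
qed

lemma char_sum_elem:
  assumes "finite A" "subgrp A" "a \<in> A"
  shows "(\<Sum>\<chi>\<in>characters A. \<chi> a) = (if a = 0 then of_nat (card (characters A)) else 0)"
proof (cases "a = 0")
  case True
  have "(\<Sum>\<chi>\<in>characters A. \<chi> 0) = (\<Sum>\<chi>\<in>characters A. 1)"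
    by (rule sum.cong) (auto simp: char_0[OF assms(2)])
  then show ?thesis using True by simp
next
  case False
  obtain \<chi>0 where chi0: "\<chi>0 \<in> characters A" "\<chi>0 a \<noteq> 1" using char_separate[OF assms False] by blast
  let ?C = "characters A"
  define \<Phi> where "\<Phi> \<chi> = (\<lambda>x. \<chi>0 x * \<chi> x)" for \<chi> :: "'a \<Rightarrow> complex"
  have img: "\<Phi> ` ?C \<subseteq> ?C"
  proof
    fix y assume "y \<in> \<Phi> ` ?C"
    then obtain \<chi> where chi: "\<chi> \<in> ?C" "y = \<Phi> \<chi>" by blast
    show "y \<in> ?C" unfolding characters_def chi(2) \<Phi>_def
      using char_mult[OF chi(1)] char_mult[OF chi0(1)] char_norm[OF chi(1)] char_norm[OF chi0(1)]
        char_out[OF chi0(1)] by (auto simp: norm_mult)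
  qed
  have inj: "inj_on \<Phi> ?C"
  proof (rule inj_onI)
    fix \<chi>1 \<chi>2 assume c: "\<chi>1 \<in> ?C" "\<chi>2 \<in> ?C" "\<Phi> \<chi>1 = \<Phi> \<chi>2"
    show "\<chi>1 = \<chi>2"
    proof
      fix x show "\<chi>1 x = \<chi>2 x"
      proof (cases "x \<in> A")
        case True
        then have "\<chi>0 x * \<chi>1 x = \<chi>0 x * \<chi>2 x" using c(3) unfolding \<Phi>_def by metis
        then show ?thesis using char_nz[OF chi0(1) True] by simp
      next
        case False then show ?thesis using char_out c by metis
      qed
    qed
  qed
  have eq: "\<Phi> ` ?C = ?C" using endo_inj_surj[OF finite_chars[OF assms(1,2)] img inj] .
  have "(\<Sum>\<chi>\<in>?C. \<chi> a) = (\<Sum>\<chi>\<in>\<Phi> ` ?C. \<chi> a)" using eq by simp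
  also have "\<dots> = (\<Sum>\<chi>\<in>?C. \<Phi> \<chi> a)" using sum.reindex[OF inj] by simp
  also have "\<dots> = \<chi>0 a * (\<Sum>\<chi>\<in>?C. \<chi> a)" unfolding \<Phi>_def by (simp add: sum_distrib_left)
  finally have "(1 - \<chi>0 a) * (\<Sum>\<chi>\<in>?C. \<chi> a) = 0" by (simp add: algebra_simps)
  then show ?thesis using chi0(2) False by simp
qed

lemma char_sum_group:
  assumes "finite A" "subgrp A" "\<chi> \<in> characters A"
  shows "(\<Sum>a\<in>A. \<chi> a) = (if \<chi> = triv A then of_nat (card A) else 0)"
proof (cases "\<chi> = triv A")
  case True then show ?thesis by (simp add: triv_def)
next
  case False
  have "\<exists>b\<in>A. \<chi> b \<noteq> 1"
  proof (rule ccontr)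
    assume "\<not> ?thesis"
    then have "\<chi> = triv A" using char_out[OF assms(3)] unfolding triv_def by (auto simp: fun_eq_iff)
    then show False using False by simp
  qed
  then obtain b where b: "b \<in> A" "\<chi> b \<noteq> 1" by blast
  have inj: "inj_on ((+) b) A" by (auto simp: inj_on_def)
  have img: "(+) b ` A \<subseteq> A" using subgrp_add[OF assms(2) b(1)] by auto
  have eq: "(+) b ` A = A" using endo_inj_surj[OF assms(1) img inj] .
  have "(\<Sum>a\<in>A. \<chi> a) = (\<Sum>a\<in>(+) b ` A. \<chi> a)" using eq by simp
  also have "\<dots> = (\<Sum>a\<in>A. \<chi> (b + a))" using sum.reindex[OF inj] by simp
  also have "\<dots> = \<chi> b * (\<Sum>a\<in>A. \<chi> a)" using char_mult[OF assms(3) b(1)] by (simp add: sum_distrib_left)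
  finally have "(1 - \<chi> b) * (\<Sum>a\<in>A. \<chi> a) = 0" by (simp add: algebra_simps)
  then show ?thesis using b(2) False by simp
qed

lemma card_chars:
  assumes "finite A" "subgrp A"
  shows "card (characters A) = card A"
proof -
  let ?C = "characters A"
  have "(\<Sum>a\<in>A. \<Sum>\<chi>\<in>?C. \<chi> a) = (\<Sum>a\<in>A. if a = 0 then of_nat (card ?C) else (0::complex))"
    using char_sum_elem[OF assms] by simp
  also have "\<dots> = of_nat (card ?C)" using assms(1) subgrp_0[OF assms(2)] by (simp add: sum.delta)
  finally have 1: "(\<Sum>a\<in>A. \<Sum>\<chi>\<in>?C. \<chi> a) = of_nat (card ?C)" .
  have "(\<Sum>\<chi>\<in>?C. \<Sum>a\<in>A. \<chi> a) = (\<Sum>\<chi>\<in>?C. if \<chi> = triv A then of_nat (card A) else (0::complex))"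
    using char_sum_group[OF assms] by simp
  also have "\<dots> = of_nat (card A)" using finite_chars[OF assms] triv_char[OF assms(2)] by (simp add: sum.delta)
  finally have 2: "(\<Sum>\<chi>\<in>?C. \<Sum>a\<in>A. \<chi> a) = of_nat (card A)" .
  have "(\<Sum>a\<in>A. \<Sum>\<chi>\<in>?C. \<chi> a) = (\<Sum>\<chi>\<in>?C. \<Sum>a\<in>A. \<chi> a)" by (rule sum.swap)
  then have "(of_nat (card ?C) :: complex) = of_nat (card A)" using 1 2 by simp
  then show ?thesis by (simp only: of_nat_eq_iff)
qed




lemma sum_shift:
  assumes "finite A" "subgrp A" "b \<in> A"
  shows "(\<Sum>a\<in>A. F (b + a)) = (\<Sum>a\<in>A. F a)"
proof -
  have inj: "inj_on ((+) b) A" by (auto simp: inj_on_def)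
  have img: "(+) b ` A \<subseteq> A" using subgrp_add[OF assms(2,3)] by auto
  have eq: "(+) b ` A = A" using endo_inj_surj[OF assms(1) img inj] .
  have "(\<Sum>a\<in>A. F a) = (\<Sum>a\<in>(+) b ` A. F a)" using eq by simp
  also have "\<dots> = (\<Sum>a\<in>A. F (b + a))" using sum.reindex[OF inj] by simp
  finally show ?thesis by simp
qed

locale setting =
  fixes K :: "int \<Rightarrow> 'k set" and dC :: "int \<Rightarrow> 'k \<Rightarrow> 'k \<Rightarrow> int"
    and G :: "int \<Rightarrow> 'g::ab_group_add set" and dG :: "int \<Rightarrow> 'g \<Rightarrow> 'g"
  assumes CC: "free_chain_complex K dC" and GC: "finite_group_chain_complex G dG"
begin

lemma K_fin: "finite (K n)" using CC by (simp add: free_chain_complex_def)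
lemma N_fin: "finite {n. K n \<noteq> {}}" using CC by (simp add: free_chain_complex_def)
lemma dCdC: "x \<in> K n \<Longrightarrow> z \<in> K (n - 2) \<Longrightarrow> (\<Sum>y\<in>K (n - 1). dC n x y * dC (n - 1) y z) = 0"
  using CC by (simp add: free_chain_complex_def)
lemma G_subgrp: "subgrp (G n)" using GC by (simp add: finite_group_chain_complex_def subgrp_def)
lemma G_fin: "finite (G n)" using GC by (simp add: finite_group_chain_complex_def)
lemma dG_mem: "a \<in> G n \<Longrightarrow> dG n a \<in> G (n - 1)" using GC by (simp add: finite_group_chain_complex_def)
lemma dG_add: "a \<in> G n \<Longrightarrow> b \<in> G n \<Longrightarrow> dG n (a + b) = dG n a + dG n b"
  using GC by (simp add: finite_group_chain_complex_def)
lemma dGdG: "a \<in> G n \<Longrightarrow> dG (n - 1) (dG n a) = 0" using GC by (simp add: finite_group_chain_complex_def)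

abbreviation C where "C p \<equiv> cochains K G p"
abbreviation \<delta> where "\<delta> p \<equiv> coboundary K dC dG p"

lemma coch_mem: "f \<in> C p \<Longrightarrow> x \<in> K n \<Longrightarrow> f n x \<in> G (n - p)" by (simp add: cochains_def)
lemma coch_out: "f \<in> C p \<Longrightarrow> x \<notin> K n \<Longrightarrow> f n x = 0" by (simp add: cochains_def)

lemma coch_subgrp: "subgrp (C p)"
  unfolding subgrp_def cochains_def using G_subgrp by (auto simp: subgrp_def)

lemma coch_fin: "finite (C p)"
proof -
  define N where "N = {n. K n \<noteq> {}}"
  define KK where "KK = (\<Union>n\<in>N. K n)"
  define GG where "GG = (\<Union>n\<in>N. G (n - p))"
  have fN: "finite N" unfolding N_def by (rule N_fin)
  have fKK: "finite KK" unfolding KK_def using fN K_fin by auto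
  have fGG: "finite GG" unfolding GG_def using fN G_fin by auto
  define B where "B = {g. \<forall>x. (x \<in> KK \<longrightarrow> g x \<in> GG) \<and> (x \<notin> KK \<longrightarrow> g x = 0)}"
  have fB: "finite B" unfolding B_def by (rule finite_set_of_finite_funs[OF fKK fGG])
  have "C p \<subseteq> {f. \<forall>n. (n \<in> N \<longrightarrow> f n \<in> B) \<and> (n \<notin> N \<longrightarrow> f n = (\<lambda>x. 0))}"
  proof (safe)
    fix f n assume f: "f \<in> C p" and n: "n \<in> N"
    show "f n \<in> B" unfolding B_def
    proof (intro CollectI allI conjI impI)
      fix x assume "x \<in> KK"
      show "f n x \<in> GG"
      proof (cases "x \<in> K n")
        case True then show ?thesis using coch_mem[OF f True] n unfolding GG_def by blast
      next
        case False then show ?thesis using coch_out[OF f False] subgrp_0[OF G_subgrp] n unfolding GG_def by force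
      qed
    next
      fix x assume "x \<notin> KK" then show "f n x = 0" using coch_out[OF f] n unfolding KK_def by blast
    qed
  next
    fix f n assume f: "f \<in> C p" and n: "n \<notin> N"
    then show "f n = (\<lambda>x. 0)" using coch_out[OF f] unfolding N_def by auto
  qed
  then show ?thesis using finite_set_of_finite_funs[OF fN fB] finite_subset by blast
qed

lemma cob_in: "x \<in> K n \<Longrightarrow> \<delta> p f n x = (\<Sum>y\<in>K (n - 1). zmul (dC n x y) (f (n - 1) y))
        - (if even p then dG (n - p) (f n x) else - dG (n - p) (f n x))"
  by (simp add: coboundary_def)
lemma cob_out: "x \<notin> K n \<Longrightarrow> \<delta> p f n x = 0"
  by (simp add: coboundary_def)

lemma cob_mem: assumes f: "f \<in> C p" shows "\<delta> p f \<in> C (p + 1)"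
  unfolding cochains_def
proof (intro CollectI conjI allI ballI impI)
  fix n x assume x: "x \<in> K n"
  have e1: "n - 1 - p = n - (p + 1)" "n - p - 1 = n - (p + 1)" by simp_all
  have s0: "(\<Sum>y\<in>K (n - 1). zmul (dC n x y) (f (n - 1) y)) \<in> G (n - 1 - p)"
    by (rule subgrp_sum[OF G_subgrp], rule subgrp_zmul[OF G_subgrp], rule coch_mem[OF f], simp)
  have s: "(\<Sum>y\<in>K (n - 1). zmul (dC n x y) (f (n - 1) y)) \<in> G (n - (p + 1))"
    using s0 e1(1) by simp
  have d: "dG (n - p) (f n x) \<in> G (n - (p + 1))" using dG_mem[OF coch_mem[OF f x]] e1(2) by simp
  show "\<delta> p f n x \<in> G (n - (p + 1))"
    unfolding cob_in[OF x] using subgrp_diff[OF G_subgrp s] d subgrp_neg[OF G_subgrp d] by auto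
next
  fix n x assume "x \<notin> K n" then show "\<delta> p f n x = 0" by (rule cob_out)
qed

lemma cob_add: assumes f: "f \<in> C p" and f': "f' \<in> C p" shows "\<delta> p (f + f') = \<delta> p f + \<delta> p f'"
proof (intro ext)
  fix n x
  show "\<delta> p (f + f') n x = (\<delta> p f + \<delta> p f') n x"
  proof (cases "x \<in> K n")
    case True
    have "dG (n - p) ((f + f') n x) = dG (n - p) (f n x) + dG (n - p) (f' n x)"
      using dG_add[OF coch_mem[OF f True] coch_mem[OF f' True]] by simp
    then show ?thesis unfolding plus_fun_apply cob_in[OF True]
      by (simp add: zmul_add_right sum.distrib algebra_simps)
  next
    case False then show ?thesis by (simp add: cob_out)
  qed
qed

lemma cob_zero: "\<delta> p 0 = 0"
  using hom_0[of "C p" "\<delta> p", OF coch_subgrp cob_add] by simp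

lemma cob_diff: assumes "a \<in> C p" "b \<in> C p" shows "\<delta> p (a - b) = \<delta> p a - \<delta> p b"
proof -
  have "\<delta> p (a - b) + \<delta> p b = \<delta> p a"
    using cob_add[OF subgrp_diff[OF coch_subgrp assms] assms(2)] by simp
  then show ?thesis by (simp add: algebra_simps)
qed

lemma cobm_in: "y \<in> K m \<Longrightarrow> \<delta> (-1) t m y = (\<Sum>z\<in>K (m - 1). zmul (dC m y z) (t (m - 1) z)) + dG (m + 1) (t m y)"
  by (simp add: coboundary_def)

lemma cob_cob: assumes t: "t \<in> C (-1)" shows "\<delta> 0 (\<delta> (-1) t) = 0"
proof (intro ext)
  fix n x
  show "\<delta> 0 (\<delta> (-1) t) n x = (0 :: int \<Rightarrow> 'k \<Rightarrow> 'g) n x"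
  proof (cases "x \<in> K n")
    case False then show ?thesis by (simp add: cob_out)
  next
    case x: True
    let ?s = "\<delta> (-1) t"
    define c where "c y = dC n x y" for y
    define v where "v z = t (n - 2) z" for z
    define u where "u y = t (n - 1) y" for y
    have tmem: "t m y \<in> G (m + 1)" if "y \<in> K m" for m y using coch_mem[OF t that] by simp
    have u_mem: "u y \<in> G n" if "y \<in> K (n - 1)" for y using tmem[OF that] unfolding u_def by simp
    have s1: "?s (n - 1) y = (\<Sum>z\<in>K (n - 2). zmul (dC (n - 1) y z) (v z)) + dG n (u y)" if "y \<in> K (n - 1)" for y
      unfolding cobm_in[OF that] u_def v_def by (simp add: algebra_simps)
    have A: "(\<Sum>y\<in>K (n - 1). zmul (c y) (?s (n - 1) y))
        = (\<Sum>y\<in>K (n - 1). zmul (c y) (\<Sum>z\<in>K (n - 2). zmul (dC (n - 1) y z) (v z)))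
          + (\<Sum>y\<in>K (n - 1). zmul (c y) (dG n (u y)))"
      by (simp add: s1 zmul_add_right sum.distrib cong: sum.cong)
    have B0: "(\<Sum>y\<in>K (n - 1). zmul (c y) (\<Sum>z\<in>K (n - 2). zmul (dC (n - 1) y z) (v z))) = 0"
    proof -
      have "(\<Sum>y\<in>K (n - 1). zmul (c y) (\<Sum>z\<in>K (n - 2). zmul (dC (n - 1) y z) (v z)))
          = (\<Sum>y\<in>K (n - 1). \<Sum>z\<in>K (n - 2). zmul (c y * dC (n - 1) y z) (v z))"
        by (simp add: zmul_sum_right zmul_mult)
      also have "\<dots> = (\<Sum>z\<in>K (n - 2). \<Sum>y\<in>K (n - 1). zmul (c y * dC (n - 1) y z) (v z))"
        by (rule sum.swap)
      also have "\<dots> = (\<Sum>z\<in>K (n - 2). zmul (\<Sum>y\<in>K (n - 1). c y * dC (n - 1) y z) (v z))"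
        by (simp add: zmul_sum_left)
      also have "\<dots> = 0" using dCdC[OF x] unfolding c_def by simp
      finally show ?thesis .
    qed
    have sn: "?s n x = (\<Sum>y\<in>K (n - 1). zmul (c y) (u y)) + dG (n + 1) (t n x)"
      unfolding cobm_in[OF x] c_def u_def ..
    have m1: "(\<Sum>y\<in>K (n - 1). zmul (c y) (u y)) \<in> G n"
      by (rule subgrp_sum[OF G_subgrp], rule subgrp_zmul[OF G_subgrp], rule u_mem, simp)
    have m2: "dG (n + 1) (t n x) \<in> G n" using dG_mem[OF tmem[OF x]] by simp
    have "dG n (?s n x) = dG n (\<Sum>y\<in>K (n - 1). zmul (c y) (u y)) + dG n (dG (n + 1) (t n x))"
      unfolding sn using dG_add[OF m1 m2] .
    also have "dG n (dG (n + 1) (t n x)) = 0" using dGdG[OF tmem[OF x]] by simp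
    also have "dG n (\<Sum>y\<in>K (n - 1). zmul (c y) (u y)) = (\<Sum>y\<in>K (n - 1). zmul (c y) (dG n (u y)))"
      using hom_sum[where A="G n" and \<phi>="dG n" and S="K (n - 1)" and f="\<lambda>y. zmul (c y) (u y)", OF G_subgrp dG_add]
        hom_zmul[where A="G n" and \<phi>="dG n", OF G_subgrp dG_add u_mem] subgrp_zmul[OF G_subgrp u_mem] by simp
    finally have D: "dG n (?s n x) = (\<Sum>y\<in>K (n - 1). zmul (c y) (dG n (u y)))" by simp
    have E: "\<delta> 0 ?s n x = (\<Sum>y\<in>K (n - 1). zmul (dC n x y) (?s (n - 1) y)) - dG n (?s n x)"
      using cob_in[OF x, where p=0 and f="?s"] by simp
    show ?thesis using E A B0 D unfolding c_def by simp
  qed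
qed

lemma cobm_mem: "t \<in> C (-1) \<Longrightarrow> \<delta> (-1) t \<in> C 0"
  using cob_mem[of t "-1"] by simp
lemma cob0_mem: "h \<in> C 0 \<Longrightarrow> \<delta> 0 h \<in> C 1"
  using cob_mem[of h 0] by simp

end



context setting begin

lemma card_C_pos: "card (C p) \<noteq> 0"
proof -
  have "C p \<noteq> {}" using subgrp_0[OF coch_subgrp] by blast
  then show ?thesis using coch_fin by simp
qed
lemma card_G_pos: "card (G n) \<noteq> 0"
proof -
  have "G n \<noteq> {}" using subgrp_0[OF G_subgrp] by blast
  then show ?thesis using G_fin by simp
qed

lemma calB0_eq: "calB0 K dC G dG \<Psi> = (\<lambda>h. if h \<in> C 0 \<and> \<delta> 0 h = 0 then \<Psi> h else 0)"
proof (intro ext)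
  fix h
  let ?D = "chains_dual K G 1"
  have cD: "card ?D = card (C 1)" unfolding chains_dual_def by (rule card_chars[OF coch_fin coch_subgrp])
  show "calB0 K dC G dG \<Psi> h = (if h \<in> C 0 \<and> \<delta> 0 h = 0 then \<Psi> h else 0)"
  proof (cases "h \<in> C 0")
    case True
    have "(\<Sum>m\<in>?D. Bop K dC G dG m \<Psi> h) = (\<Sum>m\<in>?D. m (\<delta> 0 h)) * \<Psi> h"
      unfolding Bop_def Qop_def dual_boundary_def using True by (simp add: sum_distrib_right)
    also have "\<dots> = (if \<delta> 0 h = 0 then of_nat (card ?D) else 0) * \<Psi> h"
      unfolding chains_dual_def using char_sum_elem[OF coch_fin coch_subgrp cob0_mem[OF True]] by simp
    finally show ?thesis unfolding calB0_def using True cD card_C_pos[of 1] by simp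
  next
    case False
    then show ?thesis unfolding calB0_def Bop_def Qop_def dual_boundary_def by simp
  qed
qed

lemma calA0_eq: "calA0 K dC G dG \<Phi> h = (\<Sum>t\<in>C (-1). \<Phi> (h - \<delta> (-1) t)) / of_nat (card (C (-1)))"
  unfolding calA0_def Aop_def Pop_def ..

lemma Ax0_eq: "Ax0 K dC G dG n x \<Psi> h = (\<Sum>g\<in>G (n + 1). \<Psi> (h - \<delta> (-1) (local_cochain n x g))) / of_nat (card (G (n + 1)))"
  unfolding Ax0_def Aop_def Pop_def ..

lemma Bx0_eq: assumes x: "x \<in> K n"
  shows "Bx0 K dC G dG n x \<Psi> h = (if h \<in> C 0 then (\<Sum>r\<in>characters (G (n - 1)). r (\<delta> 0 h n x)) * \<Psi> h / of_nat (card (G (n - 1))) else 0)"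
proof (cases "h \<in> C 0")
  case True
  then show ?thesis unfolding Bx0_def Bop_def Qop_def dual_boundary_def local_chain_def
    using cob0_mem[OF True] by (simp add: sum_distrib_right)
next
  case False then show ?thesis unfolding Bx0_def Bop_def Qop_def dual_boundary_def by simp
qed

lemma charG_sum: assumes "a \<in> G m"
  shows "(\<Sum>r\<in>characters (G m). r a) = (if a = 0 then of_nat (card (G m)) else 0)"
  using char_sum_elem[OF G_fin G_subgrp assms] card_chars[OF G_fin G_subgrp] by simp

lemma lc_mem: "x \<in> K n \<Longrightarrow> g \<in> G (n + 1) \<Longrightarrow> local_cochain n x g \<in> C (-1)"
  unfolding cochains_def local_cochain_def using subgrp_0[OF G_subgrp] by auto

lemma lc_add: "local_cochain n x a + local_cochain n x b = local_cochain n x (a + (b::'g))"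
  unfolding local_cochain_def by (simp add: fun_eq_iff)

definition Inv where "Inv \<Psi> \<longleftrightarrow> (\<forall>t\<in>C (-1). \<forall>h. \<Psi> (h - \<delta> (-1) t) = \<Psi> h)"
definition Supp where "Supp \<Psi> \<longleftrightarrow> (\<forall>h. \<Psi> h \<noteq> 0 \<longrightarrow> \<delta> 0 h = 0)"

lemma hilbD: "\<Psi> \<in> hilb K G \<Longrightarrow> h \<notin> C 0 \<Longrightarrow> \<Psi> h = 0" by (simp add: hilb_def)

end

context setting begin

lemma step_A: assumes "\<Psi> \<in> hilb K G" "Inv \<Psi>" "Supp \<Psi>" shows "Pi0 K dC G dG \<Psi> = \<Psi>"
proof -
  have B: "calB0 K dC G dG \<Psi> = \<Psi>"
    unfolding calB0_eq using assms(1,3) hilbD unfolding Supp_def by (auto simp: fun_eq_iff)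
  show ?thesis unfolding Pi0_def B
  proof (intro ext)
    fix h
    have "(\<Sum>t\<in>C (-1). \<Psi> (h - \<delta> (-1) t)) = (\<Sum>t\<in>C (-1). \<Psi> h)"
      using assms(2) unfolding Inv_def by (intro sum.cong) auto
    then show "calA0 K dC G dG \<Psi> h = \<Psi> h" unfolding calA0_eq using card_C_pos[of "-1"] by simp
  qed
qed

lemma step_B: assumes hil: "\<Psi> \<in> hilb K G" and P: "Pi0 K dC G dG \<Psi> = \<Psi>" shows "Inv \<Psi>" "Supp \<Psi>"
proof -
  define \<Phi> where "\<Phi> = calB0 K dC G dG \<Psi>"
  define M :: complex where "M = of_nat (card (C (-1)))"
  have PsiE: "\<Psi> h = (\<Sum>t\<in>C (-1). \<Phi> (h - \<delta> (-1) t)) / M" for h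
  proof -
    have "\<Psi> h = Pi0 K dC G dG \<Psi> h" using P by simp
    also have "\<dots> = calA0 K dC G dG \<Phi> h" by (simp add: Pi0_def \<Phi>_def)
    also have "\<dots> = (\<Sum>t\<in>C (-1). \<Phi> (h - \<delta> (-1) t)) / M" unfolding M_def by (rule calA0_eq)
    finally show ?thesis .
  qed
  show inv: "Inv \<Psi>" unfolding Inv_def
  proof (intro ballI allI)
    fix t0 h assume t0: "t0 \<in> C (-1)"
    have "\<Psi> (h - \<delta> (-1) t0) = (\<Sum>t\<in>C (-1). \<Phi> (h - \<delta> (-1) t0 - \<delta> (-1) t)) / M" by (rule PsiE)
    also have "(\<Sum>t\<in>C (-1). \<Phi> (h - \<delta> (-1) t0 - \<delta> (-1) t)) = (\<Sum>t\<in>C (-1). \<Phi> (h - \<delta> (-1) (t0 + t)))"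
      using cob_add[OF t0] by (intro sum.cong) (auto simp: algebra_simps)
    also have "\<dots> = (\<Sum>t\<in>C (-1). \<Phi> (h - \<delta> (-1) t))"
      by (rule sum_shift[OF coch_fin coch_subgrp t0])
    finally have X: "\<Psi> (h - \<delta> (-1) t0) = (\<Sum>t\<in>C (-1). \<Phi> (h - \<delta> (-1) t)) / M" .
    show "\<Psi> (h - \<delta> (-1) t0) = \<Psi> h" by (rule trans[OF X PsiE[of h, symmetric]])
  qed
  show "Supp \<Psi>" unfolding Supp_def
  proof (intro allI impI)
    fix h assume nz: "\<Psi> h \<noteq> 0"
    then have h: "h \<in> C 0" using hilbD[OF hil] by blast
    have "\<Phi> (h - \<delta> (-1) t) = (if \<delta> 0 h = 0 then \<Psi> h else 0)" if t: "t \<in> C (-1)" for t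
    proof -
      have m: "\<delta> (-1) t \<in> C 0" using cobm_mem[OF t] .
      have "h - \<delta> (-1) t \<in> C 0" using subgrp_diff[OF coch_subgrp h m] .
      moreover have "\<delta> 0 (h - \<delta> (-1) t) = \<delta> 0 h" using cob_diff[OF h m] cob_cob[OF t] by simp
      moreover have "\<Psi> (h - \<delta> (-1) t) = \<Psi> h" using inv t unfolding Inv_def by blast
      ultimately show ?thesis unfolding \<Phi>_def calB0_eq by simp
    qed
    then have "\<Psi> h = (\<Sum>t\<in>C (-1). (if \<delta> 0 h = 0 then \<Psi> h else 0)) / M"
      using PsiE[of h] by (simp cong: sum.cong)
    then have "\<Psi> h = (if \<delta> 0 h = 0 then \<Psi> h else 0)" unfolding M_def using card_C_pos[of "-1"] by simp
    then show "\<delta> 0 h = 0" using nz by (simp split: if_splits)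
  qed
qed

lemma step_C: assumes hil: "\<Psi> \<in> hilb K G" and "Inv \<Psi>" "Supp \<Psi>" shows "\<Psi> \<in> ground_space K dC G dG"
  unfolding ground_space_def
proof (intro CollectI conjI allI ballI hil)
  fix n x assume x: "x \<in> K n"
  show "Ax0 K dC G dG n x \<Psi> = \<Psi>"
  proof (intro ext)
    fix h
    have "(\<Sum>g\<in>G (n + 1). \<Psi> (h - \<delta> (-1) (local_cochain n x g))) = (\<Sum>g\<in>G (n + 1). \<Psi> h)"
      using assms(2) lc_mem[OF x] unfolding Inv_def by (intro sum.cong) auto
    then show "Ax0 K dC G dG n x \<Psi> h = \<Psi> h" unfolding Ax0_eq using card_G_pos[of "n+1"] by simp
  qed
  show "Bx0 K dC G dG n x \<Psi> = \<Psi>"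
  proof (intro ext)
    fix h
    show "Bx0 K dC G dG n x \<Psi> h = \<Psi> h"
    proof (cases "h \<in> C 0 \<and> \<Psi> h \<noteq> 0")
      case True
      then have "\<delta> 0 h = 0" using assms(3) unfolding Supp_def by blast
      then have "(\<Sum>r\<in>characters (G (n - 1)). r (\<delta> 0 h n x)) = of_nat (card (G (n - 1)))"
        using charG_sum[OF subgrp_0[OF G_subgrp]] by simp
      then show ?thesis unfolding Bx0_eq[OF x] using True card_G_pos[of "n - 1"] by simp
    next
      case False
      then show ?thesis unfolding Bx0_eq[OF x] using hilbD[OF hil] by auto
    qed
  qed
qed

lemma local_inv: assumes A: "Ax0 K dC G dG n x \<Psi> = \<Psi>" and x: "x \<in> K n" and g0: "g0 \<in> G (n + 1)"
  shows "\<Psi> (h - \<delta> (-1) (local_cochain n x g0)) = \<Psi> h"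
proof -
  let ?l = "local_cochain n x"
  let ?c = "of_nat (card (G (n + 1))) :: complex"
  have "\<Psi> (h - \<delta> (-1) (?l g0)) = Ax0 K dC G dG n x \<Psi> (h - \<delta> (-1) (?l g0))" using A by simp
  also have "\<dots> = (\<Sum>g\<in>G (n + 1). \<Psi> (h - \<delta> (-1) (?l g0) - \<delta> (-1) (?l g))) / ?c" by (rule Ax0_eq)
  also have "(\<Sum>g\<in>G (n + 1). \<Psi> (h - \<delta> (-1) (?l g0) - \<delta> (-1) (?l g))) = (\<Sum>g\<in>G (n + 1). \<Psi> (h - \<delta> (-1) (?l (g0 + g))))"
  proof (rule sum.cong)
    fix g assume g: "g \<in> G (n + 1)"
    have "\<delta> (-1) (?l (g0 + g)) = \<delta> (-1) (?l g0) + \<delta> (-1) (?l g)"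
      using cob_add[OF lc_mem[OF x g0] lc_mem[OF x g]] by (simp add: lc_add)
    then show "\<Psi> (h - \<delta> (-1) (?l g0) - \<delta> (-1) (?l g)) = \<Psi> (h - \<delta> (-1) (?l (g0 + g)))"
      by (simp add: algebra_simps)
  qed simp
  also have "\<dots> = (\<Sum>g\<in>G (n + 1). \<Psi> (h - \<delta> (-1) (?l g)))" by (rule sum_shift[OF G_fin G_subgrp g0])
  finally have X: "\<Psi> (h - \<delta> (-1) (?l g0)) = (\<Sum>g\<in>G (n + 1). \<Psi> (h - \<delta> (-1) (?l g))) / ?c" .
  have Y: "\<Psi> h = (\<Sum>g\<in>G (n + 1). \<Psi> (h - \<delta> (-1) (?l g))) / ?c"
    using Ax0_eq[of n x \<Psi> h] A by simp
  show ?thesis by (rule trans[OF X Y[symmetric]])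
qed

lemma step_D: assumes hil: "\<Psi> \<in> hilb K G" and gs: "\<Psi> \<in> ground_space K dC G dG" shows "Inv \<Psi>" "Supp \<Psi>"
proof -
  have Ax: "Ax0 K dC G dG n x \<Psi> = \<Psi>" and Bx: "Bx0 K dC G dG n x \<Psi> = \<Psi>" if "x \<in> K n" for n x
    using gs that unfolding ground_space_def by auto
  define S where "S = Sigma {n. K n \<noteq> {}} K"
  have fS: "finite S" unfolding S_def using N_fin K_fin by (rule finite_SigmaI)
  show "Inv \<Psi>" unfolding Inv_def
  proof (intro ballI allI)
    fix t h assume t: "t \<in> C (-1)"
    let ?L = "\<lambda>p. local_cochain (fst p) (snd p) (t (fst p) (snd p))"
    have Lmem: "?L p \<in> C (-1)" if pS: "p \<in> S" for p
    proof -
      obtain n x where p: "p = (n, x)" "x \<in> K n" using pS unfolding S_def by blast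
      have "t n x \<in> G (n + 1)" using coch_mem[OF t p(2)] by simp
      then show ?thesis using lc_mem[OF p(2)] p(1) by simp
    qed
    have gen: "\<forall>h. \<Psi> (h - \<delta> (-1) (\<Sum>p\<in>S'. ?L p)) = \<Psi> h" if "S' \<subseteq> S" for S'
    proof -
      have "finite S'" using fS that finite_subset by blast
      then show ?thesis using that
      proof (induction S' rule: finite_induct)
        case empty show ?case unfolding sum.empty cob_zero diff_zero by simp
      next
        case (insert p F)
        have p: "p \<in> S" using insert by blast
        have sF: "(\<Sum>q\<in>F. ?L q) \<in> C (-1)" 
          by (rule subgrp_sum[OF coch_subgrp], rule Lmem, use insert in blast)
        have loc: "\<Psi> (h' - \<delta> (-1) (?L p)) = \<Psi> h'" for h'
        proof -
          obtain n x where p': "p = (n, x)" "x \<in> K n" using p unfolding S_def by blast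
          have "t n x \<in> G (n + 1)" using coch_mem[OF t p'(2)] by simp
          then show ?thesis using local_inv[OF Ax[OF p'(2)] p'(2)] p'(1) by simp
        qed
        show ?case
        proof
          fix h'
          have "\<delta> (-1) (\<Sum>q\<in>insert p F. ?L q) = \<delta> (-1) (?L p) + \<delta> (-1) (\<Sum>q\<in>F. ?L q)"
            using insert(1,2) cob_add[OF Lmem[OF p] sF] by simp
          then have "h' - \<delta> (-1) (\<Sum>q\<in>insert p F. ?L q) = (h' - \<delta> (-1) (\<Sum>q\<in>F. ?L q)) - \<delta> (-1) (?L p)"
            by (simp only: diff_diff_eq add.commute)
          then have "\<Psi> (h' - \<delta> (-1) (\<Sum>q\<in>insert p F. ?L q)) = \<Psi> ((h' - \<delta> (-1) (\<Sum>q\<in>F. ?L q)) - \<delta> (-1) (?L p))"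
            by (rule arg_cong)
          also have "\<dots> = \<Psi> (h' - \<delta> (-1) (\<Sum>q\<in>F. ?L q))" by (rule loc)
          also have "\<dots> = \<Psi> h'" using insert(3)[OF _] insert(4) by blast
          finally show "\<Psi> (h' - \<delta> (-1) (\<Sum>q\<in>insert p F. ?L q)) = \<Psi> h'" .
        qed
      qed
    qed
    have "(\<Sum>p\<in>S. ?L p) = t"
    proof (intro ext)
      fix m y
      have "(\<Sum>p\<in>S. ?L p) m y = (\<Sum>p\<in>S. if p = (m, y) then t m y else 0)"
        unfolding sum_fun_apply local_cochain_def by (intro sum.cong) auto
      also have "\<dots> = (if (m, y) \<in> S then t m y else 0)" using fS by (simp add: sum.delta')
      also have "\<dots> = t m y" using coch_out[OF t] unfolding S_def by auto
      finally show "(\<Sum>p\<in>S. ?L p) m y = t m y" .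
    qed
    then show "\<Psi> (h - \<delta> (-1) t) = \<Psi> h" using gen[of S] by simp
  qed
  show "Supp \<Psi>" unfolding Supp_def
  proof (intro allI impI)
    fix h assume nz: "\<Psi> h \<noteq> 0"
    then have h: "h \<in> C 0" using hilbD[OF hil] by blast
    show "\<delta> 0 h = 0"
    proof (intro ext)
      fix n x
      show "\<delta> 0 h n x = (0 :: int \<Rightarrow> 'k \<Rightarrow> 'g) n x"
      proof (cases "x \<in> K n")
        case False then show ?thesis by (simp add: cob_out)
      next
        case x: True
        have a: "\<delta> 0 h n x \<in> G (n - 1)" using coch_mem[OF cob0_mem[OF h] x] by simp
        have "Bx0 K dC G dG n x \<Psi> h = \<Psi> h" using Bx[OF x] by simp
        then have "(if \<delta> 0 h n x = 0 then of_nat (card (G (n - 1))) else 0) * \<Psi> h / of_nat (card (G (n - 1))) = \<Psi> h"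
          unfolding Bx0_eq[OF x] charG_sum[OF a] using h by simp
        then show ?thesis using nz by (simp split: if_splits)
      qed
    qed
  qed
qed

lemma main: "\<Psi> \<in> hilb K G \<Longrightarrow> \<Psi> \<in> ground_space K dC G dG \<longleftrightarrow> Pi0 K dC G dG \<Psi> = \<Psi>"
proof
  assume "\<Psi> \<in> hilb K G" "\<Psi> \<in> ground_space K dC G dG"
  then show "Pi0 K dC G dG \<Psi> = \<Psi>" using step_A step_D by blast
next
  assume "\<Psi> \<in> hilb K G" "Pi0 K dC G dG \<Psi> = \<Psi>"
  then show "\<Psi> \<in> ground_space K dC G dG" using step_C step_B by blast
qed

end

theorem proposition2:
  fixes K :: "int \<Rightarrow> 'k set" and dC :: "int \<Rightarrow> 'k \<Rightarrow> 'k \<Rightarrow> int"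
    and G :: "int \<Rightarrow> 'g::ab_group_add set" and dG :: "int \<Rightarrow> 'g \<Rightarrow> 'g"
    and \<Psi> :: "(int \<Rightarrow> 'k \<Rightarrow> 'g) \<Rightarrow> complex"
  assumes "free_chain_complex K dC"
    and "finite_group_chain_complex G dG"
    and "\<Psi> \<in> hilb K G"
  shows "\<Psi> \<in> ground_space K dC G dG \<longleftrightarrow> Pi0 K dC G dG \<Psi> = \<Psi>"
proof -
  interpret setting K dC G dG using assms(1,2) by unfold_locales
  show ?thesis using main[OF assms(3)] .
qed


end
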